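(* Let $(\mathbf x,\mathbf y,\mathbf z,s,u,t,\boldsymbol\delta,\boldsymbol\beta,\gamma)$ be any primal–dual feasible pair for (P-SOCP)/(D-SOCP) and let $C\subseteq[n]$ be nonempty. If $\|\mathbf q_{ij}\|\le\lambda$ for all $i,j\in C$ with $i<j$, then the minimizer $\mathbf x^*$ of (P) satisfies $\mathbf x_i^*=\mathbf x_j^*$ for all $i,j\in C$ (i.e. $C$ is a cluster or is contained in a cluster).
   Context: Data: integers $n\ge2$, $d\ge1$, points $\mathbf a_1,\dots,\mathbf a_n\in\mathbb R^d$, weights $r_1,\dots,r_n>0$, parameter $\lambda>0$; $\|\cdot\|$ Euclidean. Problem (P): minimize over $\mathbf x=(\mathbf x_1,\dots,\mathbf x_n)\in(\mathbb R^d)^n$ the strictly convex function $f'(\mathbf x)=\frac12\sum_ir_i\|\mathbf x_i-\mathbf a_i\|^2+\lambda\sum_{i<j}r_ir_j\|\mathbf x_i-\mathbf x_j\|$; its unique minimizer is $\mathbf x^*$; clusters are the equivalence classes of $i\sim j\iff\mathbf x_i^*=\mathbf x_j^*$. Antisymmetric index notation: given vectors $\mathbf v_{ij}$ for $i<j$, $\mathbf v_{\langle ij\rangle}=\mathbf v_{ij}$ ($i<j$), $-\mathbf v_{ji}$ ($i>j$), $\mathbf 0$ ($i=j$). (P-SOCP): variables $\mathbf x_i,\mathbf z_i\in\mathbb R^d$, $s_i,u_i\in\mathbb R$, $\mathbf y_{ij}\in\mathbb R^d$, $t_{ij}\in\mathbb R$ ($i<j$); minimize $\sum_i r_is_i+\lambda\sum_{i<j}r_ir_jt_{ij}$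 s.t. $\mathbf y_{ij}=\mathbf x_i-\mathbf x_j$, $\mathbf z_i=\mathbf x_i-\mathbf a_i$, $s_i=u_i+1$, $t_{ij}\ge\|\mathbf y_{ij}\|$, $s_i\ge\|(\mathbf z_i,u_i)\|$. (D-SOCP): variables $\boldsymbol\delta_{ij}$ ($i<j$), $\boldsymbol\beta_i\in\mathbb R^d$, $\gamma_i\in\mathbb R$; maximize $\sum_ir_i\mathbf a_i^T\boldsymbol\beta_i+\sum_ir_i\gamma_i$ s.t. $\sum_jr_j\boldsymbol\delta_{\langle ij\rangle}+\boldsymbol\beta_i=\mathbf 0$, $\|\boldsymbol\delta_{ij}\|\le\lambda$, $1-\gamma_i\ge\|(\boldsymbol\beta_i,\gamma_i)\|$. $\boldsymbol\sigma_2^i:=s_i\boldsymbol\beta_i+(1-\gamma_i)\mathbf z_i$, $\sigma_3^i:=s_i\gamma_i+(1-\gamma_i)u_i$, $\boldsymbol\omega_i:=\frac{\sigma_3^i}{s_i}\mathbf z_i+\frac1{s_i}\boldsymbol\sigma_2^i$, $r_C:=\sum_{i\in C}r_i$, and for $i<j$ in $C$: $\mathbf q_{ij}:=-\boldsymbol\delta_{ij}+\frac1{r_C}(\mathbf x_i-\mathbf x_j-\boldsymbol\omega_i+\boldsymbol\omega_j)-\frac1{r_C}\sum_{k\notin C}r_k(\boldsymbol\delta_{\langle ik\rangle}-\boldsymbol\delta_{\langle jk\rangle})$. *)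

theory Defs
  imports "HOL-Analysis.Analysis"
begin

text \<open>Indices are 0,...,n-1. Points live in an arbitrary Euclidean space 'a
  (playing the role of R^d, d = DIM('a) >= 1).\<close>

definition anti :: "(nat \<Rightarrow> nat \<Rightarrow> 'a::real_vector) \<Rightarrow> nat \<Rightarrow> nat \<Rightarrow> 'a" where
  "anti v i j = (if i < j then v i j else if j < i then - v j i else 0)"

definition fobj :: "nat \<Rightarrow> (nat \<Rightarrow> real) \<Rightarrow> (nat \<Rightarrow> 'a::euclidean_space) \<Rightarrow> real
    \<Rightarrow> (nat \<Rightarrow> 'a) \<Rightarrow> real" where
  "fobj n r a lam x =
     (1/2) * (\<Sum>i<n. r i * (norm (x i - a i))\<^sup>2)
     + lam * (\<Sum>i<n. \<Sum>j\<in>{i<..<n}. r i * r j * norm (x i - x j))"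

definition primal_feasible :: "nat \<Rightarrow> (nat \<Rightarrow> 'a::euclidean_space)
    \<Rightarrow> (nat \<Rightarrow> 'a) \<Rightarrow> (nat \<Rightarrow> nat \<Rightarrow> 'a) \<Rightarrow> (nat \<Rightarrow> 'a)
    \<Rightarrow> (nat \<Rightarrow> real) \<Rightarrow> (nat \<Rightarrow> real) \<Rightarrow> (nat \<Rightarrow> nat \<Rightarrow> real) \<Rightarrow> bool" where
  "primal_feasible n a x y z s u t \<longleftrightarrow>
     (\<forall>i<n. z i = x i - a i \<and> s i = u i + 1 \<and> norm (z i, u i) \<le> s i) \<and>
     (\<forall>i j. i < j \<and> j < n \<longrightarrow> y i j = x i - x j \<and> norm (y i j) \<le> t i j)"

definition dual_feasible :: "nat \<Rightarrow> (nat \<Rightarrow> real) \<Rightarrow> real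
    \<Rightarrow> (nat \<Rightarrow> nat \<Rightarrow> 'a::euclidean_space) \<Rightarrow> (nat \<Rightarrow> 'a) \<Rightarrow> (nat \<Rightarrow> real) \<Rightarrow> bool" where
  "dual_feasible n r lam \<delta> \<beta> \<gamma> \<longleftrightarrow>
     (\<forall>i<n. (\<Sum>j<n. r j *\<^sub>R anti \<delta> i j) + \<beta> i = 0 \<and> norm (\<beta> i, \<gamma> i) \<le> 1 - \<gamma> i) \<and>
     (\<forall>i j. i < j \<and> j < n \<longrightarrow> norm (\<delta> i j) \<le> lam)"

definition sigma2 :: "(nat \<Rightarrow> real) \<Rightarrow> (nat \<Rightarrow> 'a::real_vector) \<Rightarrow> (nat \<Rightarrow> real)
    \<Rightarrow> (nat \<Rightarrow> 'a) \<Rightarrow> nat \<Rightarrow> 'a" where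
  "sigma2 s \<beta> \<gamma> z i = s i *\<^sub>R \<beta> i + (1 - \<gamma> i) *\<^sub>R z i"

definition sigma3 :: "(nat \<Rightarrow> real) \<Rightarrow> (nat \<Rightarrow> real) \<Rightarrow> (nat \<Rightarrow> real) \<Rightarrow> nat \<Rightarrow> real" where
  "sigma3 s \<gamma> u i = s i * \<gamma> i + (1 - \<gamma> i) * u i"

definition omega :: "(nat \<Rightarrow> real) \<Rightarrow> (nat \<Rightarrow> 'a::real_vector) \<Rightarrow> (nat \<Rightarrow> real)
    \<Rightarrow> (nat \<Rightarrow> 'a) \<Rightarrow> (nat \<Rightarrow> real) \<Rightarrow> nat \<Rightarrow> 'a" where
  "omega s \<beta> \<gamma> z u i =
     (sigma3 s \<gamma> u i / s i) *\<^sub>R z i + (1 / s i) *\<^sub>R sigma2 s \<beta> \<gamma> z i"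

definition qvec :: "nat \<Rightarrow> (nat \<Rightarrow> real) \<Rightarrow> nat set \<Rightarrow> (nat \<Rightarrow> 'a::real_vector)
    \<Rightarrow> (nat \<Rightarrow> 'a) \<Rightarrow> (nat \<Rightarrow> real) \<Rightarrow> (nat \<Rightarrow> real)
    \<Rightarrow> (nat \<Rightarrow> nat \<Rightarrow> 'a) \<Rightarrow> (nat \<Rightarrow> 'a) \<Rightarrow> (nat \<Rightarrow> real) \<Rightarrow> nat \<Rightarrow> nat \<Rightarrow> 'a" where
  "qvec n r C x z s u \<delta> \<beta> \<gamma> i j =
     - \<delta> i j
     + (1 / sum r C) *\<^sub>R (x i - x j - omega s \<beta> \<gamma> z u i + omega s \<beta> \<gamma> z u j)
     - (1 / sum r C) *\<^sub>R (\<Sum>k\<in>{..<n} - C. r k *\<^sub>R (anti \<delta> i k - anti \<delta> j k))"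

end

theory Submission imports Defs begin

lemma anti_swap: "anti v i j = - anti v j i" by (auto simp: anti_def)
lemma anti_diag[simp]: "anti v i i = 0" by (simp add: anti_def)

lemma dsum_anti_zero:
  fixes v :: "nat \<Rightarrow> nat \<Rightarrow> 'a::real_vector"
  shows "(\<Sum>j\<in>C. \<Sum>k\<in>C. (r j * r k) *\<^sub>R anti v j k) = 0"
proof -
  let ?S = "(\<Sum>j\<in>C. \<Sum>k\<in>C. (r j * r k) *\<^sub>R anti v j k)"
  have "?S = (\<Sum>k\<in>C. \<Sum>j\<in>C. (r j * r k) *\<^sub>R anti v j k)" by (rule sum.swap)
  also have "\<dots> = (\<Sum>k\<in>C. \<Sum>j\<in>C. - ((r k * r j) *\<^sub>R anti v k j))"
    by (intro sum.cong refl) (metis anti_swap mult.commute scaleR_minus_right)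
  also have "\<dots> = - ?S" by (simp add: sum_negf)
  finally have "?S + ?S = 0" by (simp add: eq_neg_iff_add_eq_0)
  then have "2 *\<^sub>R ?S = 0" by (simp add: scaleR_2)
  then show ?thesis by simp
qed

lemma pair_sum:
  fixes f :: "nat \<Rightarrow> nat \<Rightarrow> real"
  assumes sym: "\<And>i j. f i j = f j i" and diag: "\<And>i. f i i = 0"
  shows "(\<Sum>i<n. \<Sum>j\<in>{i<..<n}. f i j) = (1/2) * (\<Sum>i<n. \<Sum>j<n. f i j)"
proof (induction n)
  case 0 show ?case by simp
next
  case (Suc n)
  have A: "(\<Sum>i<Suc n. \<Sum>j\<in>{i<..<Suc n}. f i j) = (\<Sum>i<n. \<Sum>j\<in>{i<..<n}. f i j) + (\<Sum>i<n. f i n)"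
  proof -
    have "(\<Sum>i<Suc n. \<Sum>j\<in>{i<..<Suc n}. f i j) = (\<Sum>i<n. \<Sum>j\<in>{i<..<Suc n}. f i j)"
    proof -
      have "{n<..<Suc n} = {}" by auto
      then show ?thesis by simp
    qed
    also have "\<dots> = (\<Sum>i<n. (\<Sum>j\<in>{i<..<n}. f i j) + f i n)"
    proof (intro sum.cong refl)
      fix i assume "i \<in> {..<n}"
      then have "{i<..<Suc n} = insert n {i<..<n}" by auto
      then show "(\<Sum>j\<in>{i<..<Suc n}. f i j) = (\<Sum>j\<in>{i<..<n}. f i j) + f i n" by simp
    qed
    finally show ?thesis by (simp add: sum.distrib)
  qed
  have s: "(\<Sum>j<n. f n j) = (\<Sum>i<n. f i n)" using sym by metis
  have B: "(\<Sum>i<Suc n. \<Sum>j<Suc n. f i j) = (\<Sum>i<n. \<Sum>j<n. f i j) + 2*(\<Sum>i<n. f i n)"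
    using s by (simp add: sum.distrib diag)
  show ?case using A B Suc.IH by simp
qed

lemma omega_eq:
  assumes "s i \<noteq> 0" "s i = u i + 1"
  shows "omega s \<beta> \<gamma> z u i = z i + \<beta> i"
proof -
  have c: "(s i * \<gamma> i + (1 - \<gamma> i) * u i) / s i + (1 - \<gamma> i) / s i = 1"
  proof -
    have "(s i * \<gamma> i + (1 - \<gamma> i) * u i) + (1 - \<gamma> i) = s i" using assms(2) by (simp add: algebra_simps)
    then show ?thesis using assms(1) by (simp add: add_divide_distrib[symmetric])
  qed
  have "omega s \<beta> \<gamma> z u i = ((s i * \<gamma> i + (1 - \<gamma> i) * u i) / s i) *\<^sub>R z i + (\<beta> i + ((1 - \<gamma> i) / s i) *\<^sub>R z i)"
    using assms(1) by (simp add: omega_def sigma2_def sigma3_def scaleR_add_right)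
  also have "\<dots> = ((s i * \<gamma> i + (1 - \<gamma> i) * u i) / s i + (1 - \<gamma> i) / s i) *\<^sub>R z i + \<beta> i"
    by (simp add: scaleR_add_left algebra_simps)
  also have "\<dots> = z i + \<beta> i" using c by simp
  finally show ?thesis .
qed

lemma split_sum:
  fixes n :: nat and g :: "nat \<Rightarrow> 'b::comm_monoid_add"
  assumes "C \<subseteq> {..<n}"
  shows "(\<Sum>i<n. g i) = (\<Sum>i\<in>C. g i) + (\<Sum>i\<in>{..<n}-C. g i)"
proof -
  have "sum g {..<n} = sum g ({..<n} - C) + sum g C" by (rule sum.subset_diff[OF assms finite_lessThan])
  then show ?thesis by (simp add: add.commute)
qed

lemma fobj_split:
  fixes x a :: "nat \<Rightarrow> 'a::euclidean_space"
  assumes C: "C \<subseteq> {..<n}"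
  shows "fobj n r a lam x =
    (1/2)*(\<Sum>i\<in>C. r i * (norm (x i - a i))\<^sup>2) + (1/2)*(\<Sum>i\<in>{..<n}-C. r i * (norm (x i - a i))\<^sup>2)
    + lam/2 * ((\<Sum>i\<in>C. \<Sum>j\<in>C. r i * r j * norm (x i - x j))
        + 2*(\<Sum>i\<in>C. \<Sum>j\<in>{..<n}-C. r i * r j * norm (x i - x j))
        + (\<Sum>i\<in>{..<n}-C. \<Sum>j\<in>{..<n}-C. r i * r j * norm (x i - x j)))"
proof -
  define h where "h i j = r i * r j * norm (x i - x j)" for i j
  define N where "N = {..<n} - C"
  have ps: "(\<Sum>i<n. \<Sum>j\<in>{i<..<n}. h i j) = (1/2)*(\<Sum>i<n. \<Sum>j<n. h i j)"
    by (rule pair_sum) (auto simp: h_def norm_minus_commute)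
  have "(\<Sum>i<n. \<Sum>j<n. h i j) = (\<Sum>i<n. (\<Sum>j\<in>C. h i j) + (\<Sum>j\<in>N. h i j))"
    unfolding N_def by (intro sum.cong refl split_sum[OF C])
  also have "\<dots> = (\<Sum>i\<in>C. (\<Sum>j\<in>C. h i j) + (\<Sum>j\<in>N. h i j)) + (\<Sum>i\<in>N. (\<Sum>j\<in>C. h i j) + (\<Sum>j\<in>N. h i j))"
    unfolding N_def by (intro sum.cong refl split_sum[OF C])
  also have "\<dots> = (\<Sum>i\<in>C. \<Sum>j\<in>C. h i j) + (\<Sum>i\<in>C. \<Sum>j\<in>N. h i j) + (\<Sum>i\<in>N. \<Sum>j\<in>C. h i j) + (\<Sum>i\<in>N. \<Sum>j\<in>N. h i j)"
    by (simp add: sum.distrib)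
  also have "(\<Sum>i\<in>N. \<Sum>j\<in>C. h i j) = (\<Sum>i\<in>C. \<Sum>j\<in>N. h i j)"
    by (subst sum.swap) (simp add: h_def norm_minus_commute mult.commute)
  finally have dd: "(\<Sum>i<n. \<Sum>j<n. h i j) = (\<Sum>i\<in>C. \<Sum>j\<in>C. h i j) + 2*(\<Sum>i\<in>C. \<Sum>j\<in>N. h i j) + (\<Sum>i\<in>N. \<Sum>j\<in>N. h i j)"
    by simp
  have q: "(\<Sum>i<n. r i * (norm (x i - a i))\<^sup>2) = (\<Sum>i\<in>C. r i * (norm (x i - a i))\<^sup>2) + (\<Sum>i\<in>N. r i * (norm (x i - a i))\<^sup>2)"
    unfolding N_def by (rule split_sum[OF C])
  have e: "fobj n r a lam x = (1/2)*(\<Sum>i<n. r i * (norm (x i - a i))\<^sup>2) + lam * (\<Sum>i<n. \<Sum>j\<in>{i<..<n}. h i j)"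
    unfolding fobj_def h_def by simp
  show ?thesis
    unfolding e ps dd q unfolding h_def N_def by (simp add: algebra_simps)
qed

lemma quad_identity:
  fixes x a :: "nat \<Rightarrow> 'a::real_inner"
  assumes rC: "sum r C \<noteq> 0"
  defines "m \<equiv> (1 / sum r C) *\<^sub>R (\<Sum>i\<in>C. r i *\<^sub>R x i)"
    and "ab \<equiv> (1 / sum r C) *\<^sub>R (\<Sum>i\<in>C. r i *\<^sub>R a i)"
  shows "(1/2)*(\<Sum>i\<in>C. r i * (norm (x i - a i))\<^sup>2) + (\<Sum>i\<in>C. r i * inner (a i - ab) (x i))
       = (1/2)*(\<Sum>i\<in>C. r i * (norm (m - a i))\<^sup>2) + (1/2)*(\<Sum>i\<in>C. r i * (norm (x i - m))\<^sup>2)"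
proof -
  define X where "X = (\<Sum>i\<in>C. r i *\<^sub>R x i)"
  define A where "A = (\<Sum>i\<in>C. r i *\<^sub>R a i)"
  define R where "R = sum r C"
  define Sxx where "Sxx = (\<Sum>i\<in>C. r i * inner (x i) (x i))"
  define Saa where "Saa = (\<Sum>i\<in>C. r i * inner (a i) (a i))"
  define Sxa where "Sxa = (\<Sum>i\<in>C. r i * inner (x i) (a i))"
  have h1: "(\<Sum>i\<in>C. r i * (norm (x i - a i))\<^sup>2) = Sxx - 2*Sxa + Saa"
  proof -
    have "\<And>i. r i * (norm (x i - a i))\<^sup>2 = r i * inner (x i) (x i) - 2 * (r i * inner (x i) (a i)) + r i * inner (a i) (a i)"
      by (simp add: power2_norm_eq_inner inner_diff_left inner_diff_right inner_commute algebra_simps)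
    then show ?thesis by (simp add: Sxx_def Saa_def Sxa_def sum.distrib sum_subtractf sum_distrib_left)
  qed
  have h2: "(\<Sum>i\<in>C. r i * inner (a i - ab) (x i)) = Sxa - inner ab X"
  proof -
    have "\<And>i. r i * inner (a i - ab) (x i) = r i * inner (x i) (a i) - inner ab (r i *\<^sub>R x i)"
      by (simp add: inner_diff_left inner_commute algebra_simps)
    then show ?thesis by (simp add: Sxa_def X_def sum_subtractf inner_sum_right)
  qed
  have h3: "(\<Sum>i\<in>C. r i * (norm (m - a i))\<^sup>2) = R * inner m m - 2 * inner m A + Saa"
  proof -
    have "\<And>i. r i * (norm (m - a i))\<^sup>2 = r i * inner m m - 2 * inner m (r i *\<^sub>R a i) + r i * inner (a i) (a i)"
      by (simp add: power2_norm_eq_inner inner_diff_left inner_diff_right inner_commute algebra_simps)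
    then show ?thesis by (simp add: R_def A_def Saa_def sum.distrib sum_subtractf sum_distrib_left sum_distrib_right inner_sum_right)
  qed
  have h4: "(\<Sum>i\<in>C. r i * (norm (x i - m))\<^sup>2) = Sxx - 2 * inner m X + R * inner m m"
  proof -
    have "\<And>i. r i * (norm (x i - m))\<^sup>2 = r i * inner (x i) (x i) - 2 * inner m (r i *\<^sub>R x i) + r i * inner m m"
      by (simp add: power2_norm_eq_inner inner_diff_left inner_diff_right inner_commute algebra_simps)
    then show ?thesis by (simp add: R_def X_def Sxx_def sum.distrib sum_subtractf sum_distrib_left sum_distrib_right inner_sum_right)
  qed
  have mX: "m = (1/R) *\<^sub>R X" "ab = (1/R) *\<^sub>R A" by (simp_all add: m_def ab_def X_def A_def R_def)
  have RR: "R \<noteq> 0" using rC R_def by simp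
  have i1: "inner m m = inner X X / R^2" "inner m A = inner X A / R" "inner ab X = inner X A / R"
       "inner m X = inner X X / R"
    by (simp_all add: mX power2_eq_square inner_commute)
  show ?thesis unfolding h1 h2 h3 h4 i1 using RR by (simp add: field_simps power2_eq_square)
qed

theorem mainTheorem2:
  fixes n :: nat and a :: "nat \<Rightarrow> 'a::euclidean_space" and r :: "nat \<Rightarrow> real"
    and lam :: real and xstar :: "nat \<Rightarrow> 'a"
    and x z :: "nat \<Rightarrow> 'a" and y :: "nat \<Rightarrow> nat \<Rightarrow> 'a"
    and s u :: "nat \<Rightarrow> real" and t :: "nat \<Rightarrow> nat \<Rightarrow> real"
    and \<delta> :: "nat \<Rightarrow> nat \<Rightarrow> 'a" and \<beta> :: "nat \<Rightarrow> 'a" and \<gamma> :: "nat \<Rightarrow> real"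
    and C :: "nat set"
  assumes n2: "n \<ge> 2"
    and rpos: "\<forall>i<n. r i > 0"
    and lampos: "lam > 0"
    and xstar_min: "\<forall>w :: nat \<Rightarrow> 'a. fobj n r a lam xstar \<le> fobj n r a lam w"
    and pfeas: "primal_feasible n a x y z s u t"
    and dfeas: "dual_feasible n r lam \<delta> \<beta> \<gamma>"
    and C_sub: "C \<subseteq> {..<n}" and C_ne: "C \<noteq> {}"
    and q_bound: "\<forall>i\<in>C. \<forall>j\<in>C. i < j \<longrightarrow> norm (qvec n r C x z s u \<delta> \<beta> \<gamma> i j) \<le> lam"
  shows "\<forall>i\<in>C. \<forall>j\<in>C. xstar i = xstar j"
proof -
  define N where "N = {..<n} - C"
  define R where "R = sum r C"
  have finC: "finite C" using C_sub finite_subset by blast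
  have rC: "\<And>i. i \<in> C \<Longrightarrow> r i > 0" using rpos C_sub by auto
  have Rpos: "R > 0" unfolding R_def using finC C_ne rC by (simp add: sum_pos)
  define A where "A = (\<Sum>i\<in>C. r i *\<^sub>R a i)"
  define ab where "ab = (1/R) *\<^sub>R A"
  define X where "X = (\<Sum>i\<in>C. r i *\<^sub>R xstar i)"
  define m where "m = (1/R) *\<^sub>R X"
  define P where "P i = a i + (\<Sum>k\<in>C. r k *\<^sub>R anti \<delta> i k)" for i
  define q where "q = qvec n r C x z s u \<delta> \<beta> \<gamma>"
  define G where "G i j = anti q i j" for i j
  have beta: "\<And>i. i < n \<Longrightarrow> \<beta> i = - (\<Sum>k<n. r k *\<^sub>R anti \<delta> i k)"
  proof -
    fix i assume i: "i < n"
    have "(\<Sum>k<n. r k *\<^sub>R anti \<delta> i k) + \<beta> i = 0" using dfeas i unfolding dual_feasible_def by blast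
    then show "\<beta> i = - (\<Sum>k<n. r k *\<^sub>R anti \<delta> i k)" by (simp add: eq_neg_iff_add_eq_0 add.commute)
  qed
  have omeq: "\<And>i. i < n \<Longrightarrow> omega s \<beta> \<gamma> z u i = x i - a i + \<beta> i"
  proof -
    fix i assume i: "i < n"
    have zi: "z i = x i - a i" and si: "s i = u i + 1" and nz: "norm (z i, u i) \<le> s i"
      using pfeas i unfolding primal_feasible_def by auto
    have "norm (u i) \<le> norm (z i, u i)" by (rule norm_snd_le)
    then have "\<bar>u i\<bar> \<le> s i" using nz by simp
    then have sne: "s i \<noteq> 0" using si by linarith
    show "omega s \<beta> \<gamma> z u i = x i - a i + \<beta> i" using omega_eq[of s i u \<beta> \<gamma> z, OF sne si] zi by simp
  qed
  have qform: "\<And>i j. i \<in> C \<Longrightarrow> j \<in> C \<Longrightarrow> q i j = - \<delta> i j + (1/R) *\<^sub>R (P i - P j)"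
  proof -
    fix i j assume i: "i \<in> C" and j: "j \<in> C"
    have "i < n" "j < n" using i j C_sub by auto
    define SC where "SC l = (\<Sum>k\<in>C. r k *\<^sub>R anti \<delta> l k)" for l
    define SN where "SN l = (\<Sum>k\<in>N. r k *\<^sub>R anti \<delta> l k)" for l
    have bl: "\<And>l. l < n \<Longrightarrow> \<beta> l = - (SC l + SN l)"
      unfolding SC_def SN_def N_def using beta split_sum[OF C_sub] by metis
    have dN: "(\<Sum>k\<in>N. r k *\<^sub>R (anti \<delta> i k - anti \<delta> j k)) = SN i - SN j"
      unfolding SN_def by (simp add: scaleR_diff_right sum_subtractf)
    have E: "x i - x j - omega s \<beta> \<gamma> z u i + omega s \<beta> \<gamma> z u j - (\<Sum>k\<in>N. r k *\<^sub>R (anti \<delta> i k - anti \<delta> j k)) = P i - P j"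
      unfolding dN omeq[OF \<open>i<n\<close>] omeq[OF \<open>j<n\<close>] bl[OF \<open>i<n\<close>] bl[OF \<open>j<n\<close>] P_def SC_def[symmetric]
      by (simp add: algebra_simps)
    have "q i j = - \<delta> i j + (1/R) *\<^sub>R (x i - x j - omega s \<beta> \<gamma> z u i + omega s \<beta> \<gamma> z u j
         - (\<Sum>k\<in>N. r k *\<^sub>R (anti \<delta> i k - anti \<delta> j k)))"
      unfolding q_def qvec_def R_def N_def by (simp add: scaleR_diff_right)
    then show "q i j = - \<delta> i j + (1/R) *\<^sub>R (P i - P j)" using E by simp
  qed
  have Gform: "\<And>i j. i \<in> C \<Longrightarrow> j \<in> C \<Longrightarrow> G i j = - anti \<delta> i j + (1/R) *\<^sub>R (P i - P j)"
  proof -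
    fix i j assume i: "i \<in> C" and j: "j \<in> C"
    consider "i < j" | "j < i" | "i = j" by linarith
    then show "G i j = - anti \<delta> i j + (1/R) *\<^sub>R (P i - P j)"
    proof cases
      case 1 then show ?thesis using qform[OF i j] by (simp add: G_def anti_def)
    next
      case 2 then show ?thesis using qform[OF j i] by (simp add: G_def anti_def algebra_simps)
    next
      case 3 then show ?thesis by (simp add: G_def)
    qed
  qed
  have Gbound: "\<And>i j. i \<in> C \<Longrightarrow> j \<in> C \<Longrightarrow> norm (G i j) \<le> lam"
  proof -
    fix i j assume i: "i \<in> C" and j: "j \<in> C"
    consider "i < j" | "j < i" | "i = j" by linarith
    then show "norm (G i j) \<le> lam"
    proof cases
      case 1 then show ?thesis using q_bound i j by (simp add: G_def anti_def q_def)
    next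
      case 2 then show ?thesis using q_bound i j by (simp add: G_def anti_def q_def)
    next
      case 3 then show ?thesis using lampos by (simp add: G_def)
    qed
  qed
  have Gsum: "\<And>i. i \<in> C \<Longrightarrow> (\<Sum>j\<in>C. r j *\<^sub>R G i j) = a i - ab"
  proof -
    fix i assume i: "i \<in> C"
    have sP: "(\<Sum>j\<in>C. r j *\<^sub>R P j) = A"
    proof -
      have "(\<Sum>j\<in>C. r j *\<^sub>R P j) = A + (\<Sum>j\<in>C. \<Sum>k\<in>C. (r j * r k) *\<^sub>R anti \<delta> j k)"
        unfolding P_def A_def by (simp add: scaleR_add_right sum.distrib scaleR_sum_right)
      then show ?thesis using dsum_anti_zero[where v=\<delta> and C=C and r=r] by simp
    qed
    have "(\<Sum>j\<in>C. r j *\<^sub>R G i j) = (\<Sum>j\<in>C. - (r j *\<^sub>R anti \<delta> i j) + (1/R) *\<^sub>R (r j *\<^sub>R P i) - (1/R) *\<^sub>R (r j *\<^sub>R P j))"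
    proof (intro sum.cong refl)
      fix j assume j: "j \<in> C"
      show "r j *\<^sub>R G i j = - (r j *\<^sub>R anti \<delta> i j) + (1/R) *\<^sub>R (r j *\<^sub>R P i) - (1/R) *\<^sub>R (r j *\<^sub>R P j)"
        unfolding Gform[OF i j] by (simp add: algebra_simps)
    qed
    also have "\<dots> = - (\<Sum>j\<in>C. r j *\<^sub>R anti \<delta> i j) + (1/R) *\<^sub>R (R *\<^sub>R P i) - (1/R) *\<^sub>R A"
      unfolding sP[symmetric] R_def
      by (simp add: sum.distrib sum_subtractf sum_negf scaleR_sum_right scaleR_sum_left)
    also have "\<dots> = a i - ab" using Rpos unfolding P_def ab_def by simp
    finally show "(\<Sum>j\<in>C. r j *\<^sub>R G i j) = a i - ab" .
  qed
  have Gsum2: "\<And>j. j \<in> C \<Longrightarrow> (\<Sum>i\<in>C. r i *\<^sub>R G i j) = - (a j - ab)"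
  proof -
    fix j assume j: "j \<in> C"
    have "(\<Sum>i\<in>C. r i *\<^sub>R G i j) = - (\<Sum>i\<in>C. r i *\<^sub>R G j i)"
      by (simp add: G_def anti_swap[of q _ j] sum_negf)
    then show "(\<Sum>i\<in>C. r i *\<^sub>R G i j) = - (a j - ab)" using Gsum[OF j] by simp
  qed

  define QC where "QC w = (1/2)*(\<Sum>i\<in>C. r i * (norm (w i - a i))\<^sup>2)" for w :: "nat \<Rightarrow> 'a"
  define QN where "QN w = (1/2)*(\<Sum>i\<in>N. r i * (norm (w i - a i))\<^sup>2)" for w :: "nat \<Rightarrow> 'a"
  define CC where "CC w = (\<Sum>i\<in>C. \<Sum>j\<in>C. r i * r j * norm (w i - w j))" for w :: "nat \<Rightarrow> 'a"
  define CN where "CN w = (\<Sum>i\<in>C. \<Sum>j\<in>N. r i * r j * norm (w i - w j))" for w :: "nat \<Rightarrow> 'a"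
  define NN where "NN w = (\<Sum>i\<in>N. \<Sum>j\<in>N. r i * r j * norm (w i - w j))" for w :: "nat \<Rightarrow> 'a"
  have Fsplit: "\<And>w. fobj n r a lam w = QC w + QN w + lam/2 * (CC w + 2 * CN w + NN w)"
    unfolding QC_def QN_def CC_def CN_def NN_def N_def by (rule fobj_split[OF C_sub])
  define x' where "x' = (\<lambda>i. if i \<in> C then m else xstar i)"
  have NC: "\<And>i. i \<in> N \<Longrightarrow> i \<notin> C" unfolding N_def by auto
  have NnN: "\<And>i. i \<in> N \<Longrightarrow> i < n" unfolding N_def by auto
  have QN': "QN x' = QN xstar" unfolding QN_def x'_def using NC by (intro arg_cong[where f="\<lambda>t. (1/2) * t"] sum.cong) auto
  have NN': "NN x' = NN xstar" unfolding NN_def x'_def using NC by (intro sum.cong) auto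
  have CC': "CC x' = 0" unfolding CC_def x'_def by simp
  have QC': "QC x' = (1/2)*(\<Sum>i\<in>C. r i * (norm (m - a i))\<^sup>2)" unfolding QC_def x'_def by simp
  have CNle: "CN x' \<le> CN xstar"
  proof -
    have "CN x' = (\<Sum>j\<in>N. \<Sum>i\<in>C. r i * r j * norm (m - xstar j))"
      unfolding CN_def x'_def using NC by (subst sum.swap) (intro sum.cong refl; auto)
    also have "\<dots> \<le> (\<Sum>j\<in>N. \<Sum>i\<in>C. r i * r j * norm (xstar i - xstar j))"
    proof (rule sum_mono)
      fix j assume j: "j \<in> N"
      have rj: "r j \<ge> 0" using rpos NnN[OF j] by auto
      have "R *\<^sub>R (m - xstar j) = (\<Sum>i\<in>C. r i *\<^sub>R (xstar i - xstar j))"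
        using Rpos unfolding m_def X_def R_def by (simp add: scaleR_diff_right sum_subtractf scaleR_sum_left)
      then have "R * norm (m - xstar j) \<le> (\<Sum>i\<in>C. r i * norm (xstar i - xstar j))"
      proof -
        assume h: "R *\<^sub>R (m - xstar j) = (\<Sum>i\<in>C. r i *\<^sub>R (xstar i - xstar j))"
        have "R * norm (m - xstar j) = norm (R *\<^sub>R (m - xstar j))" using Rpos by simp
        also have "\<dots> \<le> (\<Sum>i\<in>C. norm (r i *\<^sub>R (xstar i - xstar j)))" unfolding h by (rule norm_sum)
        also have "\<dots> = (\<Sum>i\<in>C. r i * norm (xstar i - xstar j))"
          using rC by (intro sum.cong refl) (simp add: less_imp_le)
        finally show ?thesis .
      qed
      then have "r j * (R * norm (m - xstar j)) \<le> r j * (\<Sum>i\<in>C. r i * norm (xstar i - xstar j))"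
        using rj by (rule mult_left_mono)
      then show "(\<Sum>i\<in>C. r i * r j * norm (m - xstar j)) \<le> (\<Sum>i\<in>C. r i * r j * norm (xstar i - xstar j))"
        unfolding R_def by (simp add: sum_distrib_left sum_distrib_right mult.assoc mult.left_commute)
    qed
    also have "\<dots> = CN xstar" unfolding CN_def by (rule sum.swap)
    finally show ?thesis .
  qed
  have key1: "2 * (\<Sum>i\<in>C. r i * inner (a i - ab) (xstar i)) \<le> lam * CC xstar"
  proof -
    have t: "r i * r j * inner (G i j) (xstar i - xstar j) \<le> lam * (r i * r j * norm (xstar i - xstar j))"
      if i: "i \<in> C" and j: "j \<in> C" for i j
    proof -
      have "inner (G i j) (xstar i - xstar j) \<le> norm (G i j) * norm (xstar i - xstar j)"
        by (rule norm_cauchy_schwarz)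
      also have "\<dots> \<le> lam * norm (xstar i - xstar j)"
        using Gbound[OF i j] by (simp add: mult_right_mono)
      finally have "inner (G i j) (xstar i - xstar j) \<le> lam * norm (xstar i - xstar j)" .
      moreover have "r i * r j \<ge> 0" using rC[OF i] rC[OF j] by simp
      ultimately have "(r i * r j) * inner (G i j) (xstar i - xstar j) \<le> (r i * r j) * (lam * norm (xstar i - xstar j))"
        by (rule mult_left_mono)
      then show ?thesis by (simp add: algebra_simps)
    qed
    have S: "(\<Sum>i\<in>C. \<Sum>j\<in>C. r i * r j * inner (G i j) (xstar i - xstar j)) \<le> lam * CC xstar"
      unfolding CC_def sum_distrib_left using t by (intro sum_mono) auto
    have e2: "(\<Sum>i\<in>C. \<Sum>j\<in>C. r i * r j * inner (G i j) (xstar i)) = (\<Sum>i\<in>C. r i * inner (a i - ab) (xstar i))"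
    proof (intro sum.cong refl)
      fix i assume i: "i \<in> C"
      have "(\<Sum>j\<in>C. r i * r j * inner (G i j) (xstar i)) = r i * inner (\<Sum>j\<in>C. r j *\<^sub>R G i j) (xstar i)"
        by (simp add: inner_sum_left sum_distrib_left mult.assoc)
      then show "(\<Sum>j\<in>C. r i * r j * inner (G i j) (xstar i)) = r i * inner (a i - ab) (xstar i)"
        using Gsum[OF i] by simp
    qed
    have e3: "(\<Sum>i\<in>C. \<Sum>j\<in>C. r i * r j * inner (G i j) (xstar j)) = - (\<Sum>j\<in>C. r j * inner (a j - ab) (xstar j))"
    proof -
      have "(\<Sum>i\<in>C. \<Sum>j\<in>C. r i * r j * inner (G i j) (xstar j)) = (\<Sum>j\<in>C. \<Sum>i\<in>C. r i * r j * inner (G i j) (xstar j))"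
        by (rule sum.swap)
      also have "\<dots> = (\<Sum>j\<in>C. - (r j * inner (a j - ab) (xstar j)))"
      proof (intro sum.cong refl)
        fix j assume j: "j \<in> C"
        have "(\<Sum>i\<in>C. r i * r j * inner (G i j) (xstar j)) = r j * inner (\<Sum>i\<in>C. r i *\<^sub>R G i j) (xstar j)"
          by (simp add: inner_sum_left sum_distrib_left mult.assoc mult.left_commute)
        then show "(\<Sum>i\<in>C. r i * r j * inner (G i j) (xstar j)) = - (r j * inner (a j - ab) (xstar j))"
          using Gsum2[OF j] by (simp add: inner_diff_left algebra_simps)
      qed
      finally show ?thesis by (simp add: sum_negf)
    qed
    have "(\<Sum>i\<in>C. \<Sum>j\<in>C. r i * r j * inner (G i j) (xstar i - xstar j))
        = (\<Sum>i\<in>C. \<Sum>j\<in>C. r i * r j * inner (G i j) (xstar i)) - (\<Sum>i\<in>C. \<Sum>j\<in>C. r i * r j * inner (G i j) (xstar j))"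
      by (simp add: inner_diff_right right_diff_distrib sum_subtractf)
    then show ?thesis using S e2 e3 by simp
  qed
  have quad: "QC xstar + (\<Sum>i\<in>C. r i * inner (a i - ab) (xstar i))
      = (1/2)*(\<Sum>i\<in>C. r i * (norm (m - a i))\<^sup>2) + (1/2)*(\<Sum>i\<in>C. r i * (norm (xstar i - m))\<^sup>2)"
    unfolding QC_def m_def X_def ab_def A_def R_def
    by (rule quad_identity) (use Rpos R_def in simp)
  define D where "D = (\<Sum>i\<in>C. r i * (norm (xstar i - m))\<^sup>2)"
  have "fobj n r a lam x' + (1/2) * D \<le> fobj n r a lam xstar"
  proof -
    have "lam * CN x' \<le> lam * CN xstar" using CNle lampos by simp
    then show ?thesis
      unfolding Fsplit QN' NN' CC' QC' D_def using key1 quad by (simp add: ring_distribs)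
  qed
  moreover have "fobj n r a lam xstar \<le> fobj n r a lam x'" using xstar_min by simp
  ultimately have D0: "D \<le> 0" by simp
  have nn: "\<And>i. i \<in> C \<Longrightarrow> 0 \<le> r i * (norm (xstar i - m))\<^sup>2" using rC by (simp add: less_imp_le)
  have "D \<ge> 0" unfolding D_def using nn by (rule sum_nonneg)
  then have "D = 0" using D0 by linarith
  then have z: "\<And>i. i \<in> C \<Longrightarrow> r i * (norm (xstar i - m))\<^sup>2 = 0"
  proof -
    have "\<forall>i\<in>C. r i * (norm (xstar i - m))\<^sup>2 = 0"
      using sum_nonneg_eq_0_iff[OF finC, of "\<lambda>i. r i * (norm (xstar i - m))\<^sup>2"] nn \<open>D = 0\<close>
      unfolding D_def by blast
    then show "\<And>i. i \<in> C \<Longrightarrow> r i * (norm (xstar i - m))\<^sup>2 = 0" by blast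
  qed
  have "\<And>i. i \<in> C \<Longrightarrow> xstar i = m"
  proof -
    fix i assume i: "i \<in> C"
    then have "(norm (xstar i - m))\<^sup>2 = 0" using z[OF i] rC[OF i] by simp
    then show "xstar i = m" by simp
  qed
  then show ?thesis by simp
qed

end
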